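(* For any prime power $q$, there exists a $\left(3;\ (q^2+q+1)(q+1),\ q^2+q+1,\ 3\right)$ perfect hash family.
   Context: Let $r,m,q',t$ be integers with $m\ge q'\ge t\ge2$. An $(r;m,q',t)$ perfect hash family (PHF) is a set $\mathcal{X}$ of $r$ functions from a set $\mathcal{B}$ with $|\mathcal{B}|=m$ to a set $\mathcal{C}$ with $|\mathcal{C}|=q'$ such that for every $\mathcal{T}\subseteq\mathcal{B}$ with $|\mathcal{T}|=t$ there is at least one $\varphi\in\mathcal{X}$ whose restriction to $\mathcal{T}$ is injective. Equivalently, an $r\times m$ array over $q'$ symbols in which every $r\times t$ subarray has at least one row with $t$ distinct symbols. *)

theory Defs
  imports "HOL-Library.FuncSet" "HOL-Computational_Algebra.Primes"
begin

text \<open>Functions are taken extensionally (undefined outside B).\<close>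

definition is_PHF :: "('a \<Rightarrow> 'b) set \<Rightarrow> 'a set \<Rightarrow> 'b set \<Rightarrow> nat \<Rightarrow> nat \<Rightarrow> nat \<Rightarrow> nat \<Rightarrow> bool" where
  "is_PHF X B C r m q' t \<longleftrightarrow>
     finite B \<and> card B = m \<and> finite C \<and> card C = q' \<and>
     finite X \<and> card X = r \<and> X \<subseteq> (B \<rightarrow>\<^sub>E C) \<and>
     (\<forall>T \<subseteq> B. card T = t \<longrightarrow> (\<exists>\<phi>\<in>X. inj_on \<phi> T))"

definition PHF_exists :: "nat \<Rightarrow> nat \<Rightarrow> nat \<Rightarrow> nat \<Rightarrow> bool" where
  "PHF_exists r m q' t \<longleftrightarrow> (\<exists>(X :: (nat \<Rightarrow> nat) set) B C. is_PHF X B C r m q' t)"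

end

theory Submission
  imports Defs
begin

lemma absmul: fixes q e :: int assumes "\<bar>e\<bar> \<le> q" "q \<ge> 0" shows "\<bar>(q+1)*e\<bar> \<le> (q+1)*q"
  using assms by (simp add: abs_mult mult_left_mono)
lemma dvd_small: fixes N z :: int assumes "N dvd z" "\<bar>z\<bar> < N" shows "z = 0"
proof (rule ccontr)
  assume "z \<noteq> 0"
  hence "\<bar>N\<bar> \<le> \<bar>z\<bar>" using assms(1) by (rule dvd_imp_le_int)
  thus False using assms(2) by linarith
qed
lemma keyR: fixes q du dv dw :: int
  assumes q: "q \<ge> 1" and b: "0 \<le> du" "du \<le> q" "0 \<le> dv" "dv \<le> q" "0 \<le> dw" "dw \<le> q"
    and ne: "du \<noteq> dw" "dv \<noteq> dw"
    and d: "(q*q+q+1) dvd (dv - dw + (q+1)*(dw-du))"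
  shows False
proof -
  obtain k where k: "dv - dw + (q+1)*(dw-du) = (q*q+q+1)*k" using d by (auto elim: dvdE)
  have A: "\<bar>(q+1)*(dw-du)\<bar> \<le> (q+1)*q" by (rule absmul) (use b in auto)
  have A': "\<bar>(q+1)*(dw-du)\<bar> \<le> q*q+q" using A by (simp add: algebra_simps)
  have B: "\<bar>(q*q+q+1)*k\<bar> < 2*(q*q+q+1)"
  proof -
    define X where "X = (q+1)*(dw-du)"
    define Y where "Y = q*q"
    define Z where "Z = (q*q+q+1)*k"
    have "Z = dv - dw + X" using k by (simp add: X_def Z_def)
    moreover have "\<bar>X\<bar> \<le> Y + q" using A' by (simp add: X_def Y_def)
    moreover have "Y \<ge> 0" by (simp add: Y_def)
    moreover have "\<bar>dv - dw\<bar> \<le> q" using b by (simp add: abs_le_iff)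
    ultimately have "\<bar>Z\<bar> \<le> \<bar>dv - dw\<bar> + \<bar>X\<bar>" using abs_triangle_ineq by simp
    with \<open>\<bar>X\<bar> \<le> Y + q\<close> \<open>\<bar>dv - dw\<bar> \<le> q\<close> \<open>Y \<ge> 0\<close> have "\<bar>Z\<bar> < 2*(Y+q+1)" using q by simp
    thus ?thesis by (simp add: Y_def Z_def)
  qed
  have "\<bar>k\<bar> < 2"
  proof (rule ccontr)
    assume "\<not> \<bar>k\<bar> < 2"
    hence "(q*q+q+1)*2 \<le> (q*q+q+1)*\<bar>k\<bar>" using q by (intro mult_left_mono) (auto simp: add_nonneg_nonneg)
    thus False using B q by (simp add: abs_mult)
  qed
  hence "k = 0 \<or> k = 1 \<or> k = -1" by auto
  moreover have "k \<noteq> 0"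
  proof
    assume "k = 0"
    hence e: "(q+1)*(dw-du) = dw - dv" using k by simp
    have "\<bar>dw-du\<bar> \<ge> 1" using ne by auto
    hence "(q+1)*1 \<le> (q+1)*\<bar>dw-du\<bar>" using q by (intro mult_left_mono) auto
    hence "q+1 \<le> \<bar>(q+1)*(dw-du)\<bar>" using q by (simp add: abs_mult)
    hence "q+1 \<le> \<bar>dw - dv\<bar>" using e by simp
    thus False using b by (simp add: abs_le_iff)
  qed
  moreover have "k \<noteq> 1"
  proof
    assume "k = 1"
    hence e: "(q+1)*(dw-du-q) = 1 + dw - dv" using k by (simp add: algebra_simps)
    show False
    proof (cases "dw - du - q \<le> -1")
      case True
      hence "(q+1)*(dw-du-q) \<le> (q+1)*(-1)" using q by (intro mult_left_mono) auto
      thus False using e b by simp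
    next
      case False
      hence "dw - du = q" using b by auto
      thus False using e b by auto
    qed
  qed
  moreover have "k \<noteq> -1"
  proof
    assume "k = -1"
    hence e: "(q+1)*(du-dw-q) = 1 + dv - dw" using k by (simp add: algebra_simps)
    show False
    proof (cases "du - dw - q \<le> -1")
      case True
      hence "(q+1)*(du-dw-q) \<le> (q+1)*(-1)" using q by (intro mult_left_mono) auto
      thus False using e b by simp
    next
      case False
      hence "du - dw = q" using b by auto
      thus False using e b by auto
    qed
  qed
  ultimately show False by blast
qed
definition FF :: "nat \<Rightarrow> nat \<Rightarrow> nat \<Rightarrow> nat" where
  "FF N w x = (x mod N + w * (x div N)) mod N"

lemma FF_eq_dvd:
  assumes "FF N w x = FF N w y"
  shows "int N dvd (int (x mod N) - int (y mod N)) + int w * (int (x div N) - int (y div N))"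
proof -
  have "int (x mod N + w * (x div N)) mod int N = int (y mod N + w * (y div N)) mod int N"
    using assms unfolding FF_def by (metis of_nat_mod)
  hence "int N dvd int (x mod N + w * (x div N)) - int (y mod N + w * (y div N))"
    by (simp add: mod_eq_dvd_iff)
  thus ?thesis by (simp add: algebra_simps)
qed

lemma pairP:
  fixes q x y N :: nat
  assumes N_def: "N = q*q+q+1"
  assumes q: "q \<ge> 1" and x: "x < N*(q+1)" and y: "y < N*(q+1)" and xy: "x \<noteq> y"
  and w: "w1 \<in> {0,1,q+1}" "w2 \<in> {0,1,q+1}" "w1 \<noteq> w2"
  and e1: "FF N w1 x = FF N w1 y" and e2: "FF N w2 x = FF N w2 y"
  shows False
proof -
  define a where "a = int (x mod N) - int (y mod N)"
  define b where "b = int (x div N) - int (y div N)"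
  have Npos: "N > 0" unfolding N_def by simp
  have ha: "\<bar>a\<bar> < int N" 
  proof -
    have "int (x mod N) < int N" "int (y mod N) < int N" using Npos by simp_all
    moreover have "int (x mod N) \<ge> 0" "int (y mod N) \<ge> 0" by simp_all
    ultimately show ?thesis unfolding a_def abs_less_iff by linarith
  qed
  have "x div N \<le> q" "y div N \<le> q" using x y Npos by (simp_all add: div_less_iff_less_mult less_Suc_eq_le[symmetric] mult.commute)
  hence hb: "\<bar>b\<bar> \<le> int q" unfolding b_def by (simp add: abs_le_iff)
  have d1: "int N dvd a + int w1 * b" using FF_eq_dvd[OF e1] by (simp add: a_def b_def)
  have d2: "int N dvd a + int w2 * b" using FF_eq_dvd[OF e2] by (simp add: a_def b_def)
  have "int N dvd (int w1 - int w2) * b" using dvd_diff[OF d1 d2] by (simp add: algebra_simps)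
  moreover have "\<bar>(int w1 - int w2) * b\<bar> < int N"
  proof -
    have "\<bar>int w1 - int w2\<bar> \<le> int q + 1" using w by auto
    hence "\<bar>int w1 - int w2\<bar> * \<bar>b\<bar> \<le> (int q + 1) * int q" using hb by (intro mult_mono) auto
    hence "\<bar>(int w1 - int w2) * b\<bar> \<le> (int q + 1) * int q" by (simp only: abs_mult)
    moreover have "(int q + 1) * int q < int N" by (simp add: N_def algebra_simps)
    ultimately show ?thesis by linarith
  qed
  ultimately have "(int w1 - int w2) * b = 0" by (rule dvd_small)
  hence b0: "b = 0" using w by auto
  hence "a = 0" using d1 ha dvd_small by simp
  hence "x mod N = y mod N" "x div N = y div N" using b0 unfolding a_def b_def by simp_all
  thus False using xy by (metis div_mult_mod_eq)
qed

lemma rainbow: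
  fixes q u v w N :: nat
  assumes N_def: "N = q*q+q+1"
  assumes q: "q \<ge> 1" and u: "u < N*(q+1)" and v: "v < N*(q+1)" and w: "w < N*(q+1)"
  and uw: "u \<noteq> w" and vw: "v \<noteq> w"
  and e1: "FF N 0 u = FF N 0 v" and e2: "FF N 1 v = FF N 1 w" and e3: "FF N (q+1) w = FF N (q+1) u"
  shows False
proof -
  have Npos: "N > 0" unfolding N_def by simp
  define j where "j z = int (z mod N)" for z
  define d where "d z = int (z div N)" for z
  have jb: "0 \<le> j z \<and> j z < int N" for z unfolding j_def using Npos by simp
  have db: "0 \<le> d z \<and> d z \<le> int q" if "z < N*(q+1)" for z
  proof -
    have "z div N \<le> q" using that Npos by (simp add: div_less_iff_less_mult less_Suc_eq_le[symmetric] mult.commute)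
    thus ?thesis unfolding d_def by simp
  qed
  have jd: "z = z' " if "j z = j z'" "d z = d z'" for z z'
    using that unfolding j_def d_def by (metis div_mult_mod_eq of_nat_eq_iff)
  have jsmall: "j z = j z'" if "int N dvd j z - j z'" for z z'
  proof -
    have "\<bar>j z - j z'\<bar> < int N" using jb[of z] jb[of z'] by (simp add: abs_less_iff)
    thus ?thesis using dvd_small[OF that] by simp
  qed
  have K0: "int N = int q * int q + int q + 1" unfolding N_def by simp
  have d1: "int N dvd j u - j v" using FF_eq_dvd[OF e1] by (simp add: j_def)
  have d2: "int N dvd (j v - j w) + (d v - d w)" using FF_eq_dvd[OF e2] by (simp add: j_def d_def)
  have d3: "int N dvd (j w - j u) + int (q+1) * (d w - d u)" using FF_eq_dvd[OF e3] by (simp add: j_def d_def)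
  have "int N dvd (j u - j v) + ((j v - j w) + (d v - d w)) + ((j w - j u) + int (q+1) * (d w - d u))"
    using dvd_add[OF dvd_add[OF d1 d2] d3] .
  hence key: "int N dvd (d v - d w) + (int q+1) * (d w - d u)" by (simp add: algebra_simps)
  have K: "(int q * int q + int q + 1) dvd (d v - d w) + (int q+1) * (d w - d u)" using key unfolding K0 .
  have ne1: "d u \<noteq> d w"
  proof
    assume h: "d u = d w"
    hence "j w = j u" using d3 jsmall by simp
    thus False using jd h uw by metis
  qed
  have ne2: "d v \<noteq> d w"
  proof
    assume h: "d v = d w"
    hence "j v = j w" using d2 jsmall by simp
    thus False using jd h vw by metis
  qed
  show False
    using keyR[of "int q" "d u" "d v" "d w", OF _ _ _ _ _ _ _ ne1 ne2 K] q db[OF u] db[OF v] db[OF w] by simp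
qed

lemma comb:
  assumes ne: "a \<noteq> b" "b \<noteq> c" "a \<noteq> c"
  and P01: "\<And>x y. x \<noteq> y \<Longrightarrow> f0 x = f0 y \<Longrightarrow> f1 x = f1 y \<Longrightarrow> x \<in> {a,b,c} \<Longrightarrow> y \<in> {a,b,c} \<Longrightarrow> False"
  and P02: "\<And>x y. x \<noteq> y \<Longrightarrow> f0 x = f0 y \<Longrightarrow> f2 x = f2 y \<Longrightarrow> x \<in> {a,b,c} \<Longrightarrow> y \<in> {a,b,c} \<Longrightarrow> False"
  and P12: "\<And>x y. x \<noteq> y \<Longrightarrow> f1 x = f1 y \<Longrightarrow> f2 x = f2 y \<Longrightarrow> x \<in> {a,b,c} \<Longrightarrow> y \<in> {a,b,c} \<Longrightarrow> False"
  and R: "\<And>u v w. u \<in> {a,b,c} \<Longrightarrow> v \<in> {a,b,c} \<Longrightarrow> w \<in> {a,b,c} \<Longrightarrow> u \<noteq> w \<Longrightarrow> v \<noteq> w \<Longrightarrow>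
      f0 u = f0 v \<Longrightarrow> f1 v = f1 w \<Longrightarrow> f2 w = f2 u \<Longrightarrow> False"
  and c0: "f0 a = f0 b \<or> f0 a = f0 c \<or> f0 b = f0 c"
  and c1: "f1 a = f1 b \<or> f1 a = f1 c \<or> f1 b = f1 c"
  and c2: "f2 a = f2 b \<or> f2 a = f2 c \<or> f2 b = f2 c"
  shows False
  using c0 c1 c2
  apply (elim disjE)
  by (metis ne P01 P02 P12 R insertI1 insertI2 singletonI)+

theorem lemma7:
  fixes q p k :: nat
  assumes "prime p" and "k \<ge> 1" and "q = p ^ k"
  shows "PHF_exists 3 ((q^2 + q + 1) * (q + 1)) (q^2 + q + 1) 3"
proof -
  have "p > 0" using assms prime_gt_0_nat by simp
  hence q: "q \<ge> 1" using assms by simp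
  define N where "N = q*q+q+1"
  have Nq: "q^2 + q + 1 = N" by (simp add: N_def power2_eq_square)
  have Npos: "N > 0" unfolding N_def by simp
  define B where "B = {..<N*(q+1)}"
  define C where "C = {..<N}"
  define f where "f w = restrict (FF N w) B" for w
  define X where "X = {f 0, f 1, f (q+1)}"
  have NB: "N \<in> B" unfolding B_def using q Npos by simp
  have fN: "f w N = w mod N" for w using NB Npos by (simp add: f_def FF_def)
  have qN: "q + 1 < N" unfolding N_def using q by simp
  have f01: "f 0 \<noteq> f 1"
  proof
    assume "f 0 = f 1"
    hence h: "f 0 N = f 1 N" by simp
    have "f 0 N = 0 mod N" "f 1 N = 1 mod N" by (rule fN)+
    moreover have "0 mod N = 0" "1 mod N = 1" using qN q by (auto intro!: mod_less)
    ultimately show False using h q by linarith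
  qed
  have f0q: "f 0 \<noteq> f (q+1)"
  proof
    assume "f 0 = f (q+1)"
    hence h: "f 0 N = f (q+1) N" by simp
    have "f 0 N = 0 mod N" "f (q+1) N = (q+1) mod N" by (rule fN)+
    moreover have "0 mod N = 0" "(q+1) mod N = q+1" using qN q by (auto intro!: mod_less)
    ultimately show False using h q by linarith
  qed
  have f1q: "f 1 \<noteq> f (q+1)"
  proof
    assume "f 1 = f (q+1)"
    hence h: "f 1 N = f (q+1) N" by simp
    have "f 1 N = 1 mod N" "f (q+1) N = (q+1) mod N" by (rule fN)+
    moreover have "1 mod N = 1" "(q+1) mod N = q+1" using qN q by (auto intro!: mod_less)
    ultimately show False using h q by linarith
  qed
  have cardX: "card X = 3" unfolding X_def using f01 f0q f1q by simp
  have XPi: "X \<subseteq> B \<rightarrow>\<^sub>E C"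
    unfolding X_def f_def C_def using Npos by (auto simp: restrict_PiE_iff FF_def)
  have perf: "\<exists>\<phi>\<in>X. inj_on \<phi> T" if T: "T \<subseteq> B" "card T = 3" for T
  proof (rule ccontr)
    assume nn: "\<not> (\<exists>\<phi>\<in>X. inj_on \<phi> T)"
    obtain a b c where abc: "T = {a,b,c}" "a \<noteq> b" "b \<noteq> c" "a \<noteq> c" using T(2) card_3_iff by metis
    have inB: "a \<in> B" "b \<in> B" "c \<in> B" using T abc by auto
    have col: "FF N w a = FF N w b \<or> FF N w a = FF N w c \<or> FF N w b = FF N w c"
      if "w \<in> {0,1,q+1}" for w
    proof -
      have "f w \<in> X" using that unfolding X_def by auto
      hence "\<not> inj_on (f w) {a,b,c}" using nn abc by auto
      thus ?thesis using inB by (auto simp: f_def)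
    qed
    have P: "False" if "x \<in> B" "y \<in> B" "x \<noteq> y" "w1 \<in> {0,1,q+1}" "w2 \<in> {0,1,q+1}" "w1 \<noteq> w2"
      "FF N w1 x = FF N w1 y" "FF N w2 x = FF N w2 y" for x y w1 w2
    proof -
      have "x < N*(q+1)" "y < N*(q+1)" using that(1,2) by (simp_all add: B_def)
      thus False using pairP[OF N_def q _ _ that(3-8)] by blast
    qed
    have P01: False if "x \<in> B" "y \<in> B" "x \<noteq> y" "FF N 0 x = FF N 0 y" "FF N 1 x = FF N 1 y" for x y
      using P[of x y 0 1] that by auto
    have P0q: False if "x \<in> B" "y \<in> B" "x \<noteq> y" "FF N 0 x = FF N 0 y" "FF N (q+1) x = FF N (q+1) y" for x y
      using P[of x y 0 "q+1"] that by auto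
    have P1q: False if "x \<in> B" "y \<in> B" "x \<noteq> y" "FF N 1 x = FF N 1 y" "FF N (q+1) x = FF N (q+1) y" for x y
      using P[of x y 1 "q+1"] that q by auto
    have R: False if "u \<in> B" "v \<in> B" "w \<in> B" "u \<noteq> w" "v \<noteq> w"
      "FF N 0 u = FF N 0 v" "FF N 1 v = FF N 1 w" "FF N (q+1) w = FF N (q+1) u" for u v w
    proof -
      have "u < N*(q+1)" "v < N*(q+1)" "w < N*(q+1)" using that(1-3) by (simp_all add: B_def)
      thus False using rainbow[OF N_def q _ _ _ that(4-8)] by blast
    qed
    have sub: "{a,b,c} \<subseteq> B" using inB by auto
    show False
    proof (rule comb[of a b c "FF N 0" "FF N 1" "FF N (q+1)"])
      show "a \<noteq> b" "b \<noteq> c" "a \<noteq> c" using abc by auto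
      show "FF N 0 a = FF N 0 b \<or> FF N 0 a = FF N 0 c \<or> FF N 0 b = FF N 0 c" using col[of 0] by simp
      show "FF N 1 a = FF N 1 b \<or> FF N 1 a = FF N 1 c \<or> FF N 1 b = FF N 1 c" using col[of 1] by simp
      show "FF N (q+1) a = FF N (q+1) b \<or> FF N (q+1) a = FF N (q+1) c \<or> FF N (q+1) b = FF N (q+1) c" using col[of "q+1"] by simp
      show False if "x \<noteq> y" "FF N 0 x = FF N 0 y" "FF N 1 x = FF N 1 y" "x \<in> {a,b,c}" "y \<in> {a,b,c}" for x y
        using P01[OF subsetD[OF sub that(4)] subsetD[OF sub that(5)] that(1-3)] .
      show False if "x \<noteq> y" "FF N 0 x = FF N 0 y" "FF N (q+1) x = FF N (q+1) y" "x \<in> {a,b,c}" "y \<in> {a,b,c}" for x y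
        using P0q[OF subsetD[OF sub that(4)] subsetD[OF sub that(5)] that(1-3)] .
      show False if "x \<noteq> y" "FF N 1 x = FF N 1 y" "FF N (q+1) x = FF N (q+1) y" "x \<in> {a,b,c}" "y \<in> {a,b,c}" for x y
        using P1q[OF subsetD[OF sub that(4)] subsetD[OF sub that(5)] that(1-3)] .
      show False if "u \<in> {a,b,c}" "v \<in> {a,b,c}" "w \<in> {a,b,c}" "u \<noteq> w" "v \<noteq> w"
        "FF N 0 u = FF N 0 v" "FF N 1 v = FF N 1 w" "FF N (q+1) w = FF N (q+1) u" for u v w
        using R[OF subsetD[OF sub that(1)] subsetD[OF sub that(2)] subsetD[OF sub that(3)] that(4-8)] .
    qed
  qed
  have fX: "finite X" unfolding X_def by simp
  have cB: "card B = (q^2 + q + 1) * (q + 1)" unfolding B_def Nq by simp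
  have cC: "card C = q^2 + q + 1" unfolding C_def Nq by simp
  have "is_PHF X B C 3 ((q^2 + q + 1) * (q + 1)) (q^2 + q + 1) 3"
    unfolding is_PHF_def using cardX XPi perf fX cB cC unfolding B_def C_def by blast
  thus ?thesis unfolding PHF_exists_def by blast
qed

end
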